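(* Let $n\ge\ell\ge1$ and consider the saturation SQGT model with $s=\ell$ thresholds $\underline{\eta}=(1,\dots,\ell)$ (outcome of $y$ is $\min(y,\ell)$). Let $k=\lceil\log_{\ell+1}(n-\ell+1)\rceil$. Let $w_0$ be the infinite sequence $0^{\ell}\,(1^{\ell+1}0^{\ell+1})(1^{\ell+1}0^{\ell+1})\cdots$ and, for $1\le j\le k-1$, let $w_j=p(c_j)p(c_j)\cdots$ be the infinite periodic sequence of the word $p(c_j)$, where $c_j=\frac{(\ell+1)^j-1}{\ell}$ and $$p(c)=o(0)^{c}\,0\,o(1)^{c}\cdots0\,o(\ell)^{c}\;1\,u(\ell)^{c}\;1\,u(\ell-1)^{c}\cdots1\,u(0)^{c}\;0,$$ with $o(x)=0^{\ell-x}1^x$, $u(x)=1^x0^{\ell-x}$. Let $\mathbf{M}$ be the $k\times n$ binary matrix whose rows are the first $n$ entries of $w_{k-1},\dots,w_1,w_0$. Then $\mathbf{M}$ solves $\mathrm{Burst}(n,\ell,\underline{\eta})$: for all distinct $i,j\in\{0,\dots,n-\ell\}$, $\min(\mathbf{M}\mathbf{b}_i,\ell)\neq\min(\mathbf{M}\mathbf{b}_j,\ell)$ (entrywise minimum). In particular $\mathrm{Burst}(n,\ell,\underline{\eta})$ can be solved with $\lceil\log_{\ell+1}(n-\ell+1)\rceil$ measurements.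
   Context: Items are indexed $0,\dots,n-1$; $\mathbf{b}_i\in\{0,1\}^n$ is the burst of length $\ell$ with head $i$ (coordinates $i,\dots,i+\ell-1$ equal to $1$, others $0$). $w^c$ denotes the concatenation of $c$ copies of the word $w$. A matrix solves $\mathrm{Burst}(n,\ell,\underline{\eta})$ if distinct length-$\ell$ bursts yield distinct outcome vectors. *)

theory Defs
  imports Complex_Main
begin

(* binary words are lists of naturals with entries in {0,1} *)
definition ow :: "nat \<Rightarrow> nat \<Rightarrow> nat list" where
  "ow l x = replicate (l - x) 0 @ replicate x 1"

definition uw :: "nat \<Rightarrow> nat \<Rightarrow> nat list" where
  "uw l x = replicate x 1 @ replicate (l - x) 0"

definition pow_word :: "nat list \<Rightarrow> nat \<Rightarrow> nat list" where
  "pow_word w c = concat (replicate c w)"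

definition pword :: "nat \<Rightarrow> nat \<Rightarrow> nat list" where
  "pword l c =
     concat (map (\<lambda>x. (if x = 0 then [] else [0]) @ pow_word (ow l x) c) [0..<l+1])
     @ concat (map (\<lambda>x. [1] @ pow_word (uw l x) c) (rev [0..<l+1]))
     @ [0]"

definition cj :: "nat \<Rightarrow> nat \<Rightarrow> nat" where
  "cj l j = ((l + 1) ^ j - 1) div l"

definition w0 :: "nat \<Rightarrow> nat \<Rightarrow> nat" where
  "w0 l i = (if i < l then 0 else if (i - l) mod (2 * (l + 1)) < l + 1 then 1 else 0)"

definition wseq :: "nat \<Rightarrow> nat \<Rightarrow> nat \<Rightarrow> nat" where
  "wseq l j i = (if j = 0 then w0 l i
                 else (let p = pword l (cj l j) in p ! (i mod length p)))"

definition num_meas :: "nat \<Rightarrow> nat \<Rightarrow> nat" where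
  "num_meas n l = nat \<lceil>log (real (l + 1)) (real (n - l + 1))\<rceil>"

(* k x n matrix: row r (0-based) is the first n entries of w_{k-1-r} *)
definition Mmat :: "nat \<Rightarrow> nat \<Rightarrow> nat \<Rightarrow> nat \<Rightarrow> nat" where
  "Mmat n l r x = wseq l (num_meas n l - 1 - r) x"

definition burst :: "nat \<Rightarrow> nat \<Rightarrow> nat \<Rightarrow> nat" where
  "burst l i x = (if i \<le> x \<and> x < i + l then 1 else 0)"

definition outcome :: "nat \<Rightarrow> nat \<Rightarrow> nat \<Rightarrow> nat list" where
  "outcome n l i = map (\<lambda>r. min (\<Sum>x<n. Mmat n l r x * burst l i x) l) [0..<num_meas n l]"

end

theory Submission
  imports Defs
begin

lemma pow_word_len: "length (pow_word w c) = c * length w"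
  by (induction c) (auto simp: pow_word_def)

lemma pow_word_nth: "s < c * length w \<Longrightarrow> pow_word w c ! s = w ! (s mod length w)"
proof (induction c arbitrary: s)
  case 0 then show ?case by simp
next
  case (Suc c)
  have e: "pow_word w (Suc c) = w @ pow_word w c" by (simp add: pow_word_def)
  show ?case
  proof (cases "s < length w")
    case True then show ?thesis by (simp add: e nth_append)
  next
    case False
    then have "s - length w < c * length w" using Suc.prems by auto
    then show ?thesis using False Suc.IH[of "s - length w"]
      by (simp add: e nth_append pow_word_len le_mod_geq)
  qed
qed

lemma concat_len_eq:
  "(\<And>q. q < m \<Longrightarrow> length (f q) = P) \<Longrightarrow> length (concat (map f [0..<m])) = m * P"
  by (induction m) auto

lemma concat_nth_eqlen:
  assumes "\<And>q. q < m \<Longrightarrow> length (f q) = P" "t < m * P"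
  shows "concat (map f [0..<m]) ! t = f (t div P) ! (t mod P)"
  using assms
proof (induction m arbitrary: t)
  case 0 then show ?case by simp
next
  case (Suc m)
  have len: "length (concat (map f [0..<m])) = m * P"
    using Suc.prems(1) by (induction m) auto
  show ?case
  proof (cases "t < m * P")
    case True then show ?thesis using Suc by (simp add: nth_append len)
  next
    case False
    then have P: "P > 0" using Suc.prems(2) by (cases P) auto
    have "t div P = m" using False Suc.prems(2) P
      by (metis add.commute div_nat_eqI mult.commute mult_Suc_right not_le)
    moreover have "t mod P = t - m * P" using \<open>t div P = m\<close>
      by (metis minus_div_mult_eq_mod)
    ultimately show ?thesis using False by (simp add: nth_append len)
  qed
qed

lemma shift_sep:
  "a \<le> b \<Longrightarrow> g a @ concat (map (\<lambda>x. [s x] @ g x) [Suc a..<Suc b])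
     = concat (map (\<lambda>x. g x @ [s (Suc x)]) [a..<b]) @ g b"
proof (induction b)
  case 0 then show ?case by simp
next
  case (Suc b)
  show ?case
  proof (cases "a \<le> b")
    case True
    then show ?thesis using Suc.IH by simp
  next
    case False
    then have "a = Suc b" using Suc.prems by simp
    then show ?thesis by simp
  qed
qed


definition word :: "nat \<Rightarrow> nat \<Rightarrow> nat list" where
  "word l Q = (if Q < l + 1 then ow l Q else uw l (2*(l+1) - 1 - Q))"

lemma word_len: "length (word l Q) = l"
  by (simp add: word_def ow_def uw_def)

definition sepb :: "nat \<Rightarrow> nat \<Rightarrow> nat" where
  "sepb l x = (if x < l + 1 then 0 else 1)"

lemma pword_struct:
  assumes "l \<ge> 1"
  shows "pword l c = concat (map (\<lambda>x. pow_word (word l x) c @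
      [if x = 2*(l+1) - 1 then 0 else sepb l (Suc x)]) [0..<2*(l+1)])"
proof -
  let ?B = "l + 1"
  define g where "g x = pow_word (word l x) c" for x
  define A where "A x = (if x = 0 then [] else [0]) @ pow_word (ow l x) c" for x
  define U where "U x = [1] @ pow_word (uw l x) c" for x
  have pd: "pword l c = concat (map A [0..<?B]) @ concat (map U (rev [0..<?B])) @ [0]"
    unfolding pword_def A_def U_def by (rule refl)
  have s1: "concat (map A [0..<?B]) = g 0 @ concat (map (\<lambda>x. [sepb l x] @ g x) [1..<?B])"
  proof -
    have e: "[0..<?B] = 0 # [1..<?B]" by (simp add: upt_rec)
    have m: "map A [1..<?B] = map (\<lambda>x. [sepb l x] @ g x) [1..<?B]"
      by (auto simp: A_def g_def word_def sepb_def)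
    have a0: "A 0 = g 0" by (simp add: A_def g_def word_def)
    have "concat (map A [0..<?B]) = A 0 @ concat (map A [1..<?B])"
      by (subst e, simp only: list.map concat.simps)
    then show ?thesis using m a0 by (simp only:)
  qed
  have s2: "map U (rev [0..<?B]) = map (\<lambda>x. [sepb l x] @ g x) [?B..<2*?B]"
  proof (rule nth_equalityI)
    show "length (map U (rev [0..<?B])) = length (map (\<lambda>x. [sepb l x] @ g x) [?B..<2*?B])"
      by simp
  next
    fix i assume "i < length (map U (rev [0..<?B]))"
    then have i: "i < ?B" by simp
    have r1: "rev [0..<?B] ! i = l - i" using i by (simp add: rev_nth del: upt_Suc)
    have r2: "[?B..<2*?B] ! i = ?B + i" using i by (simp del: upt_Suc)
    have r3: "2*(l+1) - 1 - (?B + i) = l - i" by simp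
    show "map U (rev [0..<?B]) ! i = map (\<lambda>x. [sepb l x] @ g x) [?B..<2*?B] ! i"
      using i r1 r2 r3 by (simp add: U_def g_def word_def sepb_def del: upt_Suc)
  qed
  have s3: "[1..<?B] @ [?B..<2*?B] = [1..<2*?B]"
    by (metis le_add2 mult_2 upt_add_eq_append add.commute)
  have "pword l c = g 0 @ concat (map (\<lambda>x. [sepb l x] @ g x) [Suc 0..<Suc (2*?B - 1)]) @ [0]"
  proof -
    have q: "Suc (2*?B - 1) = 2*?B" "Suc 0 = 1" by simp_all
    have "pword l c = (g 0 @ concat (map (\<lambda>x. [sepb l x] @ g x) [1..<?B]))
        @ concat (map (\<lambda>x. [sepb l x] @ g x) [?B..<2*?B]) @ [0]"
      using pd s1 s2 by (simp only:)
    also have "\<dots> = g 0 @ concat (map (\<lambda>x. [sepb l x] @ g x) ([1..<?B] @ [?B..<2*?B])) @ [0]"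
      by (simp only: map_append concat_append append_assoc)
    finally show ?thesis unfolding s3 q .
  qed
  also have "\<dots> = concat (map (\<lambda>x. g x @ [sepb l (Suc x)]) [0..<2*?B - 1]) @ g (2*?B - 1) @ [0]"
    using shift_sep[of 0 "2*?B - 1" g "sepb l"] by simp
  also have "\<dots> = concat (map (\<lambda>x. g x @ [if x = 2*?B - 1 then 0 else sepb l (Suc x)]) [0..<2*?B])"
  proof -
    have e: "[0..<2*?B] = [0..<2*?B - 1] @ [2*?B - 1]"
    proof -
      have "[0..<Suc (2*?B - 1)] = [0..<2*?B - 1] @ [2*?B - 1]" by (rule upt_Suc_append) simp
      moreover have "Suc (2*?B - 1) = 2*?B" by simp
      ultimately show ?thesis by (simp only:)
    qed
    have "map (\<lambda>x. g x @ [if x = 2*?B - 1 then 0 else sepb l (Suc x)]) [0..<2*?B - 1]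
        = map (\<lambda>x. g x @ [sepb l (Suc x)]) [0..<2*?B - 1]" by (rule map_cong) auto
    then show ?thesis by (subst e) (simp only: map_append concat_append list.map concat.simps, simp)
  qed
  finally show ?thesis by (simp add: g_def)
qed


definition FF :: "nat \<Rightarrow> nat \<Rightarrow> nat" where
  "FF l z = (if l \<le> z \<and> z \<le> 2*l then 1 else 0)"

lemma ow_nth: "d < l \<Longrightarrow> ow l x ! d = (if d < l - x then 0 else 1)"
  by (auto simp: ow_def nth_append)

lemma uw_nth: "d < l \<Longrightarrow> x \<le> l \<Longrightarrow> uw l x ! d = (if d < x then 1 else 0)"
  by (auto simp: uw_def nth_append)

lemma word_nth:
  assumes "Q < 2*(l+1)" "d < l"
  shows "word l Q ! d = FF l ((Q + d) mod (2*(l+1)))"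
proof (cases "Q < l + 1")
  case True
  then have "(Q + d) mod (2*(l+1)) = Q + d" using assms by simp
  then show ?thesis using True assms by (auto simp: word_def ow_nth FF_def)
next
  case False
  show ?thesis
  proof (cases "Q + d < 2*(l+1)")
    case True
    then have "(Q + d) mod (2*(l+1)) = Q + d" by simp
    then show ?thesis using False assms by (auto simp: word_def uw_nth FF_def)
  next
    case F2: False
    then have "(Q + d) mod (2*(l+1)) = Q + d - 2*(l+1)" using assms
      by (simp add: le_mod_geq)
    then show ?thesis using False F2 assms by (auto simp: word_def uw_nth FF_def)
  qed
qed

lemma cj_eq: "l \<ge> 1 \<Longrightarrow> l * cj l j + 1 = (l+1)^j"
proof -
  assume l: "l \<ge> 1"
  have "\<exists>m. (l+1)^j = l*m + 1"
  proof (induction j)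
    case 0 then show ?case by simp
  next
    case (Suc j)
    then obtain m where "(l+1)^j = l*m + 1" by blast
    then have "(l+1)^Suc j = l*(m*(l+1) + 1) + 1" by (simp add: algebra_simps)
    then show ?case by blast
  qed
  then obtain m where m: "(l+1)^j = l*m + 1" by blast
  then have "cj l j = m" using l by (simp add: cj_def)
  then show ?thesis using m by simp
qed

lemma pword_len: "l \<ge> 1 \<Longrightarrow> length (pword l c) = 2*(l+1)*(l*c+1)"
proof -
  assume l: "l \<ge> 1"
  have "length (concat (map (\<lambda>x. pow_word (word l x) c @
      [if x = 2*(l+1) - 1 then 0 else sepb l (Suc x)]) [0..<2*(l+1)])) = 2*(l+1)*(l*c+1)"
    by (rule concat_len_eq) (simp add: pow_word_len word_len)
  then show ?thesis using pword_struct[OF l] by simp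
qed

lemma pword_nth:
  assumes l: "l \<ge> 1" and t: "t < 2*(l+1)*(l*c+1)"
  shows "pword l c ! t = word l (t div (l*c+1)) ! ((t mod (l*c+1)) mod l)"
proof -
  define P where "P = l*c+1"
  define f where "f x = pow_word (word l x) c @
      [if x = 2*(l+1) - 1 then 0 else sepb l (Suc x)]" for x
  have lf: "\<And>q. q < 2*(l+1) \<Longrightarrow> length (f q) = P"
    by (simp add: f_def P_def pow_word_len word_len)
  have "pword l c ! t = f (t div P) ! (t mod P)"
    using pword_struct[OF l] concat_nth_eqlen[of "2*(l+1)" f P t, OF lf] t
    unfolding f_def P_def by (simp add: mult.commute)
  moreover have "f Q ! s = word l Q ! (s mod l)" if Q: "Q < 2*(l+1)" and s: "s < P" for Q s
  proof (cases "s < c * l")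
    case True
    then show ?thesis by (simp add: f_def nth_append pow_word_len word_len pow_word_nth)
  next
    case False
    then have s': "s = c * l" using s by (simp add: P_def mult.commute)
    have "f Q ! s = (if Q = 2*(l+1) - 1 then 0 else sepb l (Suc Q))"
      using s' by (simp add: f_def nth_append pow_word_len word_len)
    also have "\<dots> = word l Q ! 0"
      using word_nth[OF Q, of 0] l Q by (auto simp: FF_def sepb_def)
    finally show ?thesis using s' by simp
  qed
  moreover have "t div P < 2*(l+1)" using t by (simp add: P_def less_mult_imp_div_less)
  moreover have "t mod P < P" by (simp add: P_def)
  ultimately show ?thesis unfolding P_def by simp
qed


lemma w0_F: assumes l: "l \<ge> 1" shows "w0 l x = FF l (x mod (2*(l+1)))"
proof -
  define z where "z = x mod (2*(l+1))"
  define m where "m = x div (2*(l+1))"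
  have x: "x = 2*(l+1)*m + z" unfolding z_def m_def by (rule mult_div_mod_eq[symmetric])
  have zl: "z < 2*(l+1)" by (simp add: z_def)
  have "w0 l x = FF l z"
  proof (cases "x < l")
    case True
    then have "z = x" by (simp add: z_def)
    then show ?thesis using True by (simp add: w0_def FF_def )
  next
    case False
    show ?thesis
    proof (cases "l \<le> z")
      case True
      have "x - l = (z - l) + 2*(l+1)*m" using x True by simp
      then have "(x - l) mod (2*(l+1)) = (z - l) mod (2*(l+1))"
        using mod_mult_self2[of "z-l" "2*(l+1)" m] by simp
      then have "(x - l) mod (2*(l+1)) = z - l" using zl by simp
      then show ?thesis using False True zl by (auto simp: w0_def FF_def )
    next
      case F2: False
      then have "m \<ge> 1" using False x by (cases m) auto
      then have "x - l = (2*(l+1) + z - l) + 2*(l+1)*(m - 1)" using x F2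
        by (cases m) (auto simp: algebra_simps)
      moreover have "2*(l+1) + z - l < 2*(l+1)" using F2 by simp
      ultimately have "(x - l) mod (2*(l+1)) = 2*(l+1) + z - l"
        using mod_mult_self2[of "2*(l+1) + z - l" "2*(l+1)" "m-1"] by simp
      then show ?thesis using False F2 zl by (auto simp: w0_def FF_def )
    qed
  qed
  then show ?thesis by (simp add: z_def)
qed

lemma wseq_F:
  assumes l: "l \<ge> 1" and j: "j \<ge> 1"
  shows "wseq l j x = FF l ((x div (l+1)^j + (x mod (l+1)^j) mod l) mod (2*(l+1)))"
proof -
  define P where "P = (l+1)^j"
  define c where "c = cj l j"
  have Pc: "l*c+1 = P" using cj_eq[OF l] by (simp add: P_def c_def)
  have P0: "P > 0" by (simp add: P_def)
  define t where "t = x mod (2*(l+1)*P)"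
  have len: "length (pword l c) = 2*(l+1)*P" using pword_len[OF l, of c] unfolding Pc .
  have tl: "t < 2*(l+1)*P" using P0 by (simp add: t_def)
  have t: "t = P * (x div P mod (2*(l+1))) + x mod P"
    unfolding t_def by (metis mod_mult2_eq mult.commute)
  have td: "t div P = x div P mod (2*(l+1))" using t P0 by simp
  have tm: "t mod P = x mod P" using t P0 by simp
  have "wseq l j x = pword l c ! (x mod length (pword l c))"
    using j by (simp add: wseq_def Let_def c_def)
  also have "\<dots> = pword l c ! t" unfolding len t_def ..
  also have "\<dots> = word l (t div P) ! ((t mod P) mod l)"
    using pword_nth[OF l, of t c] tl unfolding Pc by blast
  also have "\<dots> = FF l ((x div P mod (2*(l+1)) + (x mod P) mod l) mod (2*(l+1)))"
    unfolding td tm using l by (intro word_nth) auto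
  also have "\<dots> = FF l ((x div P + (x mod P) mod l) mod (2*(l+1)))"
    by (simp add: mod_add_left_eq)
  finally show ?thesis by (simp add: P_def)
qed


lemma cyc_sum:
  fixes r l :: nat and g :: "nat \<Rightarrow> nat"
  assumes "l > 0"
  shows "(\<Sum>k<l. g ((r + k) mod l)) = (\<Sum>k<l. (g k :: nat))"
proof (induction r)
  case 0 then show ?case by (intro sum.cong) auto
next
  case (Suc r)
  define h where "h k = g ((r + k) mod l)" for k
  have "(\<Sum>k<Suc l. h k) = h 0 + (\<Sum>k<l. h (Suc k))" by (rule sum.lessThan_Suc_shift)
  moreover have "(\<Sum>k<Suc l. h k) = (\<Sum>k<l. h k) + h l" by simp
  moreover have "h l = h 0" by (simp add: h_def)
  ultimately have "(\<Sum>k<l. h (Suc k)) = (\<Sum>k<l. h k)" by simp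
  then show ?case using Suc.IH by (simp add: h_def)
qed

lemma S1: "(\<Sum>k<n. if a \<le> z + k then 1 else 0) = n - (a - (z::nat))"
  by (induction n) auto

lemma S2: "(\<Sum>k<n. if z + k \<le> b then 1 else 0) = min n (b + 1 - (z::nat))"
  by (induction n) auto

definition gg :: "nat \<Rightarrow> nat \<Rightarrow> nat" where
  "gg l a = (let z = a mod (2*(l+1)) in if z < l + 1 then z else 2*(l+1) - 1 - z)"

lemma count_FF:
  assumes l: "l \<ge> 1"
  shows "(\<Sum>k<l. FF l ((a + k) mod (2*(l+1)))) = gg l a"
proof -
  define z where "z = a mod (2*(l+1))"
  have zl: "z < 2*(l+1)" by (simp add: z_def)
  have "(\<Sum>k<l. FF l ((a + k) mod (2*(l+1)))) = (\<Sum>k<l. FF l ((z + k) mod (2*(l+1))))"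
    by (simp add: z_def mod_add_left_eq)
  also have "\<dots> = (if z < l + 1 then z else 2*(l+1) - 1 - z)"
  proof (cases "z < l + 1")
    case True
    have "(\<Sum>k<l. FF l ((z + k) mod (2*(l+1)))) = (\<Sum>k<l. if l \<le> z + k then 1 else 0)"
    proof (rule sum.cong)
      fix k assume "k \<in> {..<l}"
      then have "z + k < 2*(l+1)" using True by simp
      then show "FF l ((z + k) mod (2*(l+1))) = (if l \<le> z + k then 1 else 0)"
        using True \<open>k \<in> {..<l}\<close> by (simp add: FF_def)
    qed simp
    also have "\<dots> = z" using True by (simp add: S1)
    finally show ?thesis using True by simp
  next
    case False
    have "(\<Sum>k<l. FF l ((z + k) mod (2*(l+1)))) = (\<Sum>k<l. if z + k \<le> 2*l then 1 else 0)"
    proof (rule sum.cong)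
      fix k assume k: "k \<in> {..<l}"
      show "FF l ((z + k) mod (2*(l+1))) = (if z + k \<le> 2*l then 1 else 0)"
      proof (cases "z + k < 2*(l+1)")
        case True then show ?thesis using False by (simp add: FF_def)
      next
        case F2: False
        then have "(z + k) mod (2*(l+1)) = z + k - 2*(l+1)" using zl k by (simp add: le_mod_geq)
        moreover have "z + k - 2*(l+1) < l" using zl k by simp
        ultimately show ?thesis using F2 by (simp add: FF_def)
      qed
    qed simp
    also have "\<dots> = 2*(l+1) - 1 - z" using False zl by (simp add: S2)
    finally show ?thesis using False by simp
  qed
  finally show ?thesis by (simp add: gg_def z_def Let_def)
qed

lemma window_arith:
  fixes l P c k i :: nat
  assumes l: "l \<ge> 1" and P: "P = l*c + 1" and c: "c \<ge> 1" and k: "k < l"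
  shows "(i+k) div P + ((i+k) mod P) mod l = i div P + (i mod P + k) mod l"
proof -
  define Q where "Q = i div P"
  define r where "r = i mod P"
  have P0: "P > 0" using P by simp
  have rP: "r < P" using P0 by (simp add: r_def)
  have ik: "i + k = (r + k) + Q * P" by (simp add: Q_def r_def)
  show ?thesis
  proof (cases "r + k < P")
    case True
    have "(i+k) div P = Q" unfolding ik using True P0 by simp
    moreover have "(i+k) mod P = r + k" unfolding ik using True P0 by simp
    ultimately show ?thesis by (simp add: Q_def r_def)
  next
    case False
    have "l*1 \<le> l*c" using c by (rule mult_le_mono2)
    then have lP: "l < P" using P by linarith
    have e: "r + k = (r + k - P) + 1 * P" using False by simp
    have rk: "r + k - P < l - 1" using rP k False by simp
    have rkP: "r + k - P < P" using rk lP by simp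
    have d1: "(r + k) div P = 1" by (subst e) (simp add: rkP P0 div_add_self2)
    have m1: "(r + k) mod P = r + k - P" by (subst e) (simp add: rkP P0 div_add_self2)
    have "(i+k) div P = Q + 1" unfolding ik using d1 P0 by simp
    moreover have "(i+k) mod P = r + k - P" unfolding ik using m1 P0 by simp
    moreover have "(r + k) mod l = r + k - P + 1"
    proof -
      have "r + k = (r + k - P + 1) + c * l" using False P by simp
      then have "(r + k) mod l = (r + k - P + 1) mod l" by (metis mod_mult_self1)
      then show ?thesis using rk by simp
    qed
    ultimately show ?thesis using rk by (simp add: Q_def r_def)
  qed
qed


lemma wsum:
  assumes l: "l \<ge> 1"
  shows "(\<Sum>k<l. wseq l j (i+k)) = gg l (i div (l+1)^j)"
proof (cases "j = 0")
  case True
  have "(\<Sum>k<l. wseq l j (i+k)) = (\<Sum>k<l. FF l ((i + k) mod (2*(l+1))))"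
    using True by (simp add: wseq_def w0_F[OF l])
  also have "\<dots> = gg l i" by (rule count_FF[OF l])
  finally show ?thesis using True by simp
next
  case False
  then have j: "j \<ge> 1" by simp
  define P where "P = (l+1)^j"
  define c where "c = cj l j"
  have Pc: "P = l*c + 1" using cj_eq[OF l] by (simp add: P_def c_def)
  have "l + 1 \<le> P" unfolding P_def using j
    by (metis One_nat_def le_add2 power_increasing power_one_right add_2_eq_Suc' le_add_same_cancel2 not_one_le_zero)
  then have c1: "c \<ge> 1" using Pc l by (cases c) auto
  have "(\<Sum>k<l. wseq l j (i+k))
      = (\<Sum>k<l. FF l ((i div P + (i mod P + k) mod l) mod (2*(l+1))))"
  proof (rule sum.cong)
    fix k assume "k \<in> {..<l}"
    then have k: "k < l" by simp
    show "wseq l j (i+k) = FF l ((i div P + (i mod P + k) mod l) mod (2*(l+1)))"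
      using wseq_F[OF l j, of "i+k"] window_arith[OF l Pc c1 k, of i] by (simp add: P_def)
  qed simp
  also have "\<dots> = (\<Sum>k<l. FF l ((i div P + k) mod (2*(l+1))))"
    using cyc_sum[of l "\<lambda>y. FF l ((i div P + y) mod (2*(l+1)))" "i mod P"] l by simp
  also have "\<dots> = gg l (i div P)" by (rule count_FF[OF l])
  finally show ?thesis by (simp add: P_def)
qed

lemma gg_le: "gg l a \<le> l"
  by (auto simp: gg_def Let_def)

lemma gg_step:
  assumes g: "gg l a = gg l a'" and d: "a div (l+1) = a' div (l+1)"
  shows "a = a'"
proof -
  define B where "B = l + 1"
  have m: "x mod (2*B) = B * (x div B mod 2) + x mod B" for x
    using mod_mult2_eq[of x B 2] by (simp add: mult.commute)
  have p: "a div B mod 2 = a' div B mod 2" using d by (simp add: B_def)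
  have bl: "a mod B < B" "a' mod B < B" by (simp_all add: B_def)
  have "a mod B = a' mod B"
  proof (cases "a div B mod 2 = 0")
    case True
    then have "a' div B mod 2 = 0" using p by simp
    then show ?thesis using True g m[of a] m[of a'] bl unfolding gg_def Let_def B_def[symmetric]
      by simp
  next
    case False
    then have "a div B mod 2 = 1" by simp
    moreover then have "a' div B mod 2 = 1" using p by simp
    ultimately have "B - Suc (a mod B) = B - Suc (a' mod B)"
      using g m[of a] m[of a'] bl unfolding gg_def Let_def B_def[symmetric] by simp
    then show ?thesis using bl by linarith
  qed
  then show ?thesis using d
    by (metis B_def mult_div_mod_eq)
qed

lemma gray_inj:
  assumes l: "l \<ge> 1" and g: "\<forall>j<K. gg l (i div (l+1)^j) = gg l (i' div (l+1)^j)"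
    and i: "i < (l+1)^K" and i': "i' < (l+1)^K"
  shows "i = i'"
proof -
  have "t \<le> K \<Longrightarrow> i div (l+1)^(K-t) = i' div (l+1)^(K-t)" for t
  proof (induction t)
    case 0 then show ?case using i i' by simp
  next
    case (Suc t)
    define j where "j = K - Suc t"
    have jK: "j < K" "K - t = Suc j" using Suc.prems by (auto simp: j_def)
    have e: "x div (l+1)^(Suc j) = x div (l+1)^j div (l+1)" for x
      by (simp only: power_Suc2 div_mult2_eq)
    have "i div (l+1)^(Suc j) = i' div (l+1)^(Suc j)"
      using Suc.IH Suc.prems jK by simp
    then have d: "i div (l+1)^j div (l+1) = i' div (l+1)^j div (l+1)" unfolding e .
    have "i div (l+1)^j = i' div (l+1)^j"
      using gg_step[OF _ d] g jK by simp
    then show ?case by (simp add: j_def)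
  qed
  from this[of K] show ?thesis by simp
qed

lemma burst_sum:
  assumes "i + l \<le> n"
  shows "(\<Sum>x<n. f x * burst l i x) = (\<Sum>k<l. f (i+k))"
proof -
  have "(\<Sum>x<n. f x * burst l i x) = (\<Sum>x\<in>{..<n}. if x \<in> {i..<i+l} then f x else 0)"
    by (intro sum.cong) (auto simp: burst_def)
  also have "\<dots> = sum f ({..<n} \<inter> {i..<i+l})" by (simp add: sum.inter_restrict)
  also have "{..<n} \<inter> {i..<i+l} = {i..<i+l}" using assms by auto
  also have "sum f {i..<i+l} = (\<Sum>k<l. f (i+k))"
    using sum.shift_bounds_nat_ivl[of f 0 i l] by (simp add: lessThan_atLeast0 add.commute)
  finally show ?thesis .
qed

lemma bound:
  assumes l: "l \<ge> 1" and n: "l \<le> n"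
  shows "n - l + 1 \<le> (l+1)^(num_meas n l)"
proof -
  define m where "m = n - l + 1"
  define L where "L = log (real (l+1)) (real m)"
  have B1: "real (l+1) > 1" using l by simp
  have m0: "real m > 0" by (simp add: m_def)
  have L0: "L \<ge> 0" using B1 m0 by (simp add: L_def m_def)
  have "real (num_meas n l) = real_of_int \<lceil>L\<rceil>"
    using L0 by (simp add: num_meas_def L_def m_def)
  then have Lk: "L \<le> real (num_meas n l)" by simp
  have "real m = real (l+1) powr L" using B1 m0 by (simp add: L_def)
  also have "\<dots> \<le> real (l+1) powr real (num_meas n l)" using B1 Lk by simp
  also have "\<dots> = real ((l+1)^(num_meas n l))" using B1 by (simp add: powr_realpow)
  finally have "real m \<le> real ((l+1)^(num_meas n l))" .
  then show ?thesis unfolding m_def using of_nat_le_iff by blast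
qed


lemma outcome_nth:
  assumes l: "l \<ge> 1" and i: "i + l \<le> n" and r: "r < num_meas n l"
  shows "outcome n l i ! r = gg l (i div (l+1)^(num_meas n l - 1 - r))"
proof -
  have "outcome n l i ! r = min (\<Sum>x<n. Mmat n l r x * burst l i x) l"
    using r by (simp add: outcome_def)
  also have "(\<Sum>x<n. Mmat n l r x * burst l i x) = (\<Sum>k<l. Mmat n l r (i+k))"
    by (rule burst_sum[OF i])
  also have "\<dots> = gg l (i div (l+1)^(num_meas n l - 1 - r))"
    unfolding Mmat_def by (rule wsum[OF l])
  finally show ?thesis using gg_le[of l] by (simp add: min_def)
qed

theorem mainTheorem4:
  fixes n l :: nat
  assumes "1 \<le> l" and "l \<le> n"
  shows "\<forall>i\<le>n - l. \<forall>j\<le>n - l. i \<noteq> j \<longrightarrow> outcome n l i \<noteq> outcome n l j"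
proof (intro allI impI)
  fix i j assume i: "i \<le> n - l" and j: "j \<le> n - l" and ij: "i \<noteq> j"
  show "outcome n l i \<noteq> outcome n l j"
  proof
    assume eq: "outcome n l i = outcome n l j"
    define K where "K = num_meas n l"
    have g: "\<forall>jj<K. gg l (i div (l+1)^jj) = gg l (j div (l+1)^jj)"
    proof (intro allI impI)
      fix jj assume jj: "jj < K"
      have r: "K - 1 - jj < num_meas n l" using jj by (simp add: K_def)
      have e: "K - 1 - (K - 1 - jj) = jj" using jj by simp
      have "outcome n l i ! (K - 1 - jj) = outcome n l j ! (K - 1 - jj)" using eq by simp
      then show "gg l (i div (l+1)^jj) = gg l (j div (l+1)^jj)"
        using outcome_nth[OF assms(1) _ r, of i] outcome_nth[OF assms(1) _ r, of j] i j assms e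
        unfolding K_def by simp
    qed
    have "i < (l+1)^K" "j < (l+1)^K" using bound[OF assms] i j assms by (simp_all add: K_def)
    then have "i = j" using gray_inj[OF assms(1) g] by simp
    then show False using ij by simp
  qed
qed

end
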